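(* For any $\rho>0$ and $\Delta>0$, the following randomized procedure $\texttt{DPStats}_M$ satisfies $\rho$-zCDP (with respect to datasets of $n$ rows $(x_i,y_i)\in\mathbb{R}^2$, where $n$ and $n_1$ are public; rows $1,\dots,n_1$ form group 1 and rows $n_1+1,\dots,n$ form group 2). Input: data, integers $n\ge2$ and $1\le n_1<n$, positive integers $r,q$ with $r<n$, and $\rho,\Delta>0$. Set $\rho'=\rho/8$, $n_2=n-n_1$, $G_1=\{1,\dots,n_1\}$, $G_2=\{n_1+1,\dots,n\}$, and for $j\in\{1,2\}$ compute with independent Gaussian noises: $\tilde{\bar x}_j=\frac1{n_j}\sum_{i\in G_j}[x_i]_{-\Delta}^{\Delta}+\mathcal{N}(0,\frac{2\Delta^2}{\rho' n_j^2})$, $\widetilde{\overline{x^2}}_j=\frac1{n_j}\sum_{i\in G_j}[x_i^2]_0^{\Delta^2}+\mathcal{N}(0,\frac{\Delta^4}{2\rho' n_j^2})$, $\widetilde{\overline{xy}}_j=\frac1{n_j}\sum_{i\in G_j}[x_iy_i]_{-\Delta^2}^{\Delta^2}+\mathcal{N}(0,\frac{2\Delta^4}{\rho' n_j^2})$, $\widetilde{\overline{y^2}}_j=\frac1{n_j}\sum_{i\in G_j}[y_i^2]_0^{\Delta^2}+\mathcal{N}(0,\frac{\Delta^4}{2\rho' n_j^2})$; then $\tilde{\bar x}=\frac{n_1}{n}\tilde{\bar x}_1+\frac{n_2}{n}\tilde{\bar x}_2$, and similarly $\widetilde{\overline{x^2}},\widetilde{\overline{xy}},\widetilde{\overline{y^2}}$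 as the corresponding $n_j/n$-weighted combinations; $\tilde\beta_j=\widetilde{\overline{xy}}_j/\widetilde{\overline{x^2}}_j$, $\tilde\beta=\frac{n_1}{n}\tilde\beta_1+\frac{n_2}{n}\tilde\beta_2$; $\widetilde{S_0^2}=\frac{n\widetilde{\overline{y^2}}+n\tilde\beta^2-2n\widetilde{\overline{xy}}\tilde\beta}{n-r}$, $\widetilde{S^2}=\frac{\sum_{j=1}^2\left(n_j\widetilde{\overline{y^2}}_j+n_j\tilde\beta_j^2-2n_j\widetilde{\overline{xy}}_j\tilde\beta_j\right)}{n-r}$. Output $(\perp,\perp)$ unless $\min\big(\widetilde{S_0^2},(n\widetilde{\overline{x^2}}-n\tilde{\bar x}^2)/(n-1)\big)>0$, in which case output $\tilde\theta_0=(\tilde\beta_1,\tilde{\bar x},\widetilde{\overline{x^2}},\widetilde{S_0^2},n_1,n_2,n)$ and $\tilde\theta_1=(\tilde\beta_1,\tilde\beta_2,\widetilde{\overline{x^2}}_1,\widetilde{\overline{x^2}}_2,\widetilde{\overline{x^2}},\widetilde{S^2},n_1,n_2,n)$.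
   Context: $[z]_a^b$ denotes $z$ clipped to $[a,b]$. Two datasets of $n$ rows are neighboring if they differ in exactly one row. A randomized mechanism $\mathcal{M}$ satisfies $\rho$-zCDP if for all neighboring datasets $\mathbf{x},\mathbf{x}'$ and all $\alpha\in(1,\infty)$, $D_\alpha(\mathcal{M}(\mathbf{x})\|\mathcal{M}(\mathbf{x}'))\le\rho\alpha$, where $D_\alpha$ is the Rényi divergence of order $\alpha$. *)

theory Defs
  imports "HOL-Probability.Probability"
begin

definition clip :: "real \<Rightarrow> real \<Rightarrow> real \<Rightarrow> real" where
  "clip a b z = max a (min b z)"

text \<open>A dataset of n rows (x_i, y_i) in R^2 is a list of length n; row i of the paper
  is list position i-1.  Two datasets are neighbouring if they differ in exactly one row.\<close>

definition neighboring :: "nat \<Rightarrow> (real \<times> real) list \<Rightarrow> (real \<times> real) list \<Rightarrow> bool" where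
  "neighboring n xs xs' \<longleftrightarrow> length xs = n \<and> length xs' = n \<and>
     (\<exists>i<n. xs ! i \<noteq> xs' ! i \<and> (\<forall>j<n. j \<noteq> i \<longrightarrow> xs ! j = xs' ! j))"

definition renyi_divergence :: "real \<Rightarrow> 'a measure \<Rightarrow> 'a measure \<Rightarrow> ereal" where
  "renyi_divergence \<alpha> P Q =
     (if absolutely_continuous Q P then
        (let I = (\<integral>\<^sup>+ \<omega>. ennreal ((enn2real (RN_deriv Q P \<omega>)) powr \<alpha>) \<partial>Q) in
          if I = \<infinity> then \<infinity> else ereal (ln (enn2real I) / (\<alpha> - 1)))
      else \<infinity>)"

definition zCDP :: "nat \<Rightarrow> real \<Rightarrow> ((real \<times> real) list \<Rightarrow> 'b measure) \<Rightarrow> bool" where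
  "zCDP n \<rho> M \<longleftrightarrow>
     (\<forall>xs xs'. neighboring n xs xs' \<longrightarrow>
        (\<forall>\<alpha>::real. \<alpha> > 1 \<longrightarrow> renyi_divergence \<alpha> (M xs) (M xs') \<le> ereal (\<rho> * \<alpha>)))"

text \<open>Outputs: None stands for (\<bottom>,\<bottom>); Some (\<theta>0, \<theta>1) otherwise.
  The sigma-algebra is the Borel one on the tuples, with \<bottom> an extra atom.\<close>

type_synonym theta0 = "real \<times> real \<times> real \<times> real \<times> nat \<times> nat \<times> nat"
type_synonym theta1 = "real \<times> real \<times> real \<times> real \<times> real \<times> real \<times> nat \<times> nat \<times> nat"

definition out_space :: "(theta0 \<times> theta1) option measure" where
  "out_space = sigma UNIV {A. Some -` A \<in> sets (borel :: (theta0 \<times> theta1) measure)}"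

text \<open>Eight independent Gaussian noises z 0 .. z 7; for group j (j = 1,2) the noises
  z (4(j-1)), ..., z (4(j-1)+3) are added to the means of x, x^2, xy, y^2 respectively.
  normal_density 0 \<sigma> is the N(0,\<sigma>^2) density.\<close>

definition noise_var :: "real \<Rightarrow> real \<Rightarrow> nat \<Rightarrow> nat \<Rightarrow> nat \<Rightarrow> real" where
  "noise_var \<rho> \<Delta> n1 n2 k =
     (let \<rho>' = \<rho> / 8; nj = real (if k < 4 then n1 else n2) in
      if k mod 4 = 0 then 2 * \<Delta>^2 / (\<rho>' * nj^2)
      else if k mod 4 = 1 then \<Delta>^4 / (2 * \<rho>' * nj^2)
      else if k mod 4 = 2 then 2 * \<Delta>^4 / (\<rho>' * nj^2)
      else \<Delta>^4 / (2 * \<rho>' * nj^2))"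

definition noise_space :: "real \<Rightarrow> real \<Rightarrow> nat \<Rightarrow> nat \<Rightarrow> (nat \<Rightarrow> real) measure" where
  "noise_space \<rho> \<Delta> n1 n2 =
     PiM {0..<8} (\<lambda>k. density lborel (normal_density 0 (sqrt (noise_var \<rho> \<Delta> n1 n2 k))))"

definition dpstats_out ::
  "nat \<Rightarrow> nat \<Rightarrow> nat \<Rightarrow> real \<Rightarrow> (real \<times> real) list \<Rightarrow> (nat \<Rightarrow> real) \<Rightarrow> (theta0 \<times> theta1) option" where
  "dpstats_out n n1 r \<Delta> xs z =
    (let n2 = n - n1;
         G = (\<lambda>j::nat. if j = 1 then take n1 xs else drop n1 xs);
         nn = (\<lambda>j::nat. real (if j = 1 then n1 else n2));
         b = (\<lambda>j::nat. if j = 1 then 0 else 4::nat);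
         mx  = (\<lambda>j. (\<Sum>(x,y)\<leftarrow>G j. clip (-\<Delta>) \<Delta> x) / nn j + z (b j));
         mx2 = (\<lambda>j. (\<Sum>(x,y)\<leftarrow>G j. clip 0 (\<Delta>^2) (x^2)) / nn j + z (b j + 1));
         mxy = (\<lambda>j. (\<Sum>(x,y)\<leftarrow>G j. clip (-(\<Delta>^2)) (\<Delta>^2) (x*y)) / nn j + z (b j + 2));
         my2 = (\<lambda>j. (\<Sum>(x,y)\<leftarrow>G j. clip 0 (\<Delta>^2) (y^2)) / nn j + z (b j + 3));
         N = real n;
         w = (\<lambda>f. nn 1 / N * f 1 + nn 2 / N * f 2);
         Mx = w mx; Mx2 = w mx2; Mxy = w mxy; My2 = w my2;
         \<beta>j = (\<lambda>j. mxy j / mx2 j);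
         \<beta> = w \<beta>j;
         S02 = (N * My2 + N * \<beta>^2 - 2 * N * Mxy * \<beta>) / (real n - real r);
         S2 = (\<Sum>j\<in>{1,2::nat}. nn j * my2 j + nn j * (\<beta>j j)^2 - 2 * nn j * mxy j * \<beta>j j)
                / (real n - real r)
     in if min S02 ((N * Mx2 - N * Mx^2) / (real n - 1)) > 0
        then Some ((\<beta>j 1, Mx, Mx2, S02, n1, n2, n),
                   (\<beta>j 1, \<beta>j 2, mx2 1, mx2 2, Mx2, S2, n1, n2, n))
        else None)"

text \<open>q is an input of the procedure that it does not use.\<close>
definition DPStats_M ::
  "nat \<Rightarrow> nat \<Rightarrow> nat \<Rightarrow> nat \<Rightarrow> real \<Rightarrow> real \<Rightarrow> (real \<times> real) list \<Rightarrow> (theta0 \<times> theta1) option measure" where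
  "DPStats_M n n1 r q \<rho> \<Delta> xs =
     distr (noise_space \<rho> \<Delta> n1 (n - n1)) out_space (dpstats_out n n1 r \<Delta> xs)"

end

theory Submission
  imports Defs
begin


lemma young_alpha:
  fixes a b \<alpha> :: real
  assumes "\<alpha> > 1" "a \<ge> 0" "b \<ge> 0"
  shows "a powr (\<alpha>-1) * b \<le> (\<alpha>-1)/\<alpha> * a powr \<alpha> + b powr \<alpha> / \<alpha>"
proof -
  have "a powr (\<alpha>-1) * b \<le> (a powr (\<alpha>-1)) powr (\<alpha>/(\<alpha>-1)) / (\<alpha>/(\<alpha>-1)) + b powr \<alpha> / \<alpha>"
    using assms by (intro Youngs_inequality) (auto simp: field_simps)
  also have "(a powr (\<alpha>-1)) powr (\<alpha>/(\<alpha>-1)) = a powr \<alpha>"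
    using assms by (simp add: powr_powr)
  finally show ?thesis using assms by (simp add: field_simps)
qed

lemma dp_bound:
  fixes Q :: "'a measure" and N :: "'b measure" and p :: "'a \<Rightarrow> real"
  assumes Q: "prob_space Q" and pm[measurable]: "p \<in> borel_measurable Q" and p0: "\<And>x. p x \<ge> 0"
    and g[measurable]: "g \<in> measurable Q N" and \<alpha>: "\<alpha> > 1"
  shows "absolutely_continuous (distr Q N g) (distr (density Q p) N g)"
    and "(\<integral>\<^sup>+\<omega>. ennreal (enn2real (RN_deriv (distr Q N g) (distr (density Q p) N g) \<omega>) powr \<alpha>) \<partial>distr Q N g)
          \<le> (\<integral>\<^sup>+x. ennreal (p x powr \<alpha>) \<partial>Q)"
proof -
  interpret Q: prob_space Q by fact
  define Q' where "Q' = distr Q N g"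
  define P' where "P' = distr (density Q p) N g"
  interpret Q': prob_space Q' unfolding Q'_def by (rule Q.prob_space_distr) simp
  have setsP: "sets P' = sets Q'" unfolding P'_def Q'_def by simp
  show ac: "absolutely_continuous (distr Q N g) (distr (density Q p) N g)"
    unfolding absolutely_continuous_def
  proof
    fix A assume "A \<in> null_sets (distr Q N g)"
    then have A: "A \<in> sets N" "emeasure Q (g -` A \<inter> space Q) = 0"
      by (auto simp: emeasure_distr null_sets_def)
    then have "g -` A \<inter> space Q \<in> null_sets Q" by (auto simp: null_sets_def)
    then have "AE x in Q. x \<notin> g -` A \<inter> space Q" by (rule AE_not_in)
    then have "AE x in Q. g x \<in> A \<longrightarrow> ennreal (p x) = 0"
      using AE_space by eventually_elim auto
    then have "g -` A \<inter> space Q \<in> null_sets (density Q p)"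
      using A by (simp add: null_sets_density_iff)
    then show "A \<in> null_sets (distr (density Q p) N g)"
      using A by (auto simp: null_sets_def emeasure_distr)
  qed
  define h where "h = RN_deriv Q' P'"
  have hm[measurable]: "h \<in> borel_measurable Q'" unfolding h_def by simp
  have dens: "density Q' h = P'"
    unfolding h_def using ac setsP by (intro Q'.density_RN_deriv) (auto simp: Q'_def P'_def)
  define I where "I = (\<integral>\<^sup>+x. ennreal (p x powr \<alpha>) \<partial>Q)"
  define k where "k = (\<lambda>m::nat. \<lambda>\<omega>. min (enn2real (h \<omega>)) (real m))"
  have km[measurable]: "k m \<in> borel_measurable Q'" for m unfolding k_def by measurable
  have kmN[measurable]: "k m \<in> borel_measurable N" for m
    using km[of m] by (simp add: Q'_def)
  have k0: "k m \<omega> \<ge> 0" for m \<omega> unfolding k_def by auto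
  have Jle: "(\<integral>\<^sup>+\<omega>. ennreal (k m \<omega> powr \<alpha>) \<partial>Q') \<le> I" for m
  proof -
    define J where "J = (\<integral>\<^sup>+\<omega>. ennreal (k m \<omega> powr \<alpha>) \<partial>Q')"
    have Jfin: "J \<le> ennreal (real m powr \<alpha>)"
    proof -
      have "J \<le> (\<integral>\<^sup>+\<omega>. ennreal (real m powr \<alpha>) \<partial>Q')"
        unfolding J_def using \<alpha> by (intro nn_integral_mono ennreal_leI powr_mono2) (auto simp: k_def)
      also have "\<dots> = ennreal (real m powr \<alpha>)" by (simp add: Q'.emeasure_space_1)
      finally show ?thesis .
    qed
    have "J \<le> (\<integral>\<^sup>+\<omega>. h \<omega> * ennreal (k m \<omega> powr (\<alpha>-1)) \<partial>Q')"
      unfolding J_def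
    proof (intro nn_integral_mono)
      fix \<omega>
      have "k m \<omega> powr \<alpha> = k m \<omega> powr ((\<alpha>-1) + 1)" by simp
      also have "\<dots> = k m \<omega> powr (\<alpha>-1) * k m \<omega> powr 1" by (rule powr_add)
      also have "\<dots> = k m \<omega> powr (\<alpha>-1) * k m \<omega>" using k0[of m \<omega>] by simp
      also have "\<dots> \<le> k m \<omega> powr (\<alpha>-1) * enn2real (h \<omega>)"
        by (intro mult_left_mono) (auto simp: k_def)
      finally have "ennreal (k m \<omega> powr \<alpha>) \<le> ennreal (enn2real (h \<omega>)) * ennreal (k m \<omega> powr (\<alpha>-1))"
        by (simp add: ennreal_mult'[symmetric] mult.commute ennreal_leI)
      also have "\<dots> \<le> h \<omega> * ennreal (k m \<omega> powr (\<alpha>-1))"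
        by (intro mult_right_mono) (auto simp: ennreal_enn2real_if)
      finally show "ennreal (k m \<omega> powr \<alpha>) \<le> h \<omega> * ennreal (k m \<omega> powr (\<alpha>-1))" .
    qed
    also have "\<dots> = (\<integral>\<^sup>+\<omega>. ennreal (k m \<omega> powr (\<alpha>-1)) \<partial>P')"
      by (subst dens[symmetric]) (simp add: nn_integral_density)
    also have "\<dots> = (\<integral>\<^sup>+x. ennreal (k m (g x) powr (\<alpha>-1)) \<partial>density Q p)"
      unfolding P'_def by (subst nn_integral_distr) (auto simp: Q'_def)
    also have "\<dots> = (\<integral>\<^sup>+x. ennreal (p x) * ennreal (k m (g x) powr (\<alpha>-1)) \<partial>Q)"
      using km[of m] by (subst nn_integral_density) (auto simp: Q'_def)
    also have "\<dots> \<le> (\<integral>\<^sup>+x. ennreal ((\<alpha>-1)/\<alpha>) * ennreal (k m (g x) powr \<alpha>) + ennreal (1/\<alpha>) * ennreal (p x powr \<alpha>) \<partial>Q)"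
    proof (intro nn_integral_mono)
      fix x
      have "k m (g x) powr (\<alpha>-1) * p x \<le> (\<alpha>-1)/\<alpha> * k m (g x) powr \<alpha> + p x powr \<alpha> / \<alpha>"
        by (rule young_alpha[OF \<alpha> k0 p0])
      then show "ennreal (p x) * ennreal (k m (g x) powr (\<alpha>-1)) \<le> ennreal ((\<alpha>-1)/\<alpha>) * ennreal (k m (g x) powr \<alpha>) + ennreal (1/\<alpha>) * ennreal (p x powr \<alpha>)"
        using \<alpha> p0[of x] by (simp add: ennreal_mult'[symmetric] ennreal_plus[symmetric] mult.commute ennreal_leI del: ennreal_plus)
    qed
    also have "\<dots> = ennreal ((\<alpha>-1)/\<alpha>) * (\<integral>\<^sup>+x. ennreal (k m (g x) powr \<alpha>) \<partial>Q) + ennreal (1/\<alpha>) * I"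
      unfolding I_def using km[of m]
      by (subst nn_integral_add) (auto simp: nn_integral_cmult Q'_def)
    also have "(\<integral>\<^sup>+x. ennreal (k m (g x) powr \<alpha>) \<partial>Q) = J"
      unfolding J_def Q'_def using km[of m] by (subst nn_integral_distr) (auto simp: Q'_def)
    finally have *: "J \<le> ennreal ((\<alpha>-1)/\<alpha>) * J + ennreal (1/\<alpha>) * I" .
    show ?thesis
    proof (cases "I = \<infinity>")
      case True then show ?thesis by simp
    next
      case False
      then obtain i where i: "I = ennreal i" "i \<ge> 0" by (cases I) auto
      obtain j where j: "J = ennreal j" "j \<ge> 0" using Jfin by (cases J) (auto simp: top_unique)
      from * have "ennreal j \<le> ennreal ((\<alpha>-1)/\<alpha> * j + 1/\<alpha> * i)"
        using i j \<alpha> by (simp add: ennreal_mult'[symmetric] ennreal_plus[symmetric] del: ennreal_plus)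
      then have "j \<le> (\<alpha>-1)/\<alpha> * j + 1/\<alpha> * i"
        using i j \<alpha> by (subst (asm) ennreal_le_iff) auto
      then have "\<alpha> * j \<le> (\<alpha>-1) * j + i" using \<alpha> by (simp add: field_simps)
      then have "j \<le> i" by (simp add: algebra_simps)
      then show ?thesis using i j by (simp add: J_def[symmetric] ennreal_leI)
    qed
  qed
  have sup: "ennreal (enn2real (h \<omega>) powr \<alpha>) = (SUP m. ennreal (k m \<omega> powr \<alpha>))" for \<omega>
  proof (rule antisym)
    obtain m :: nat where "enn2real (h \<omega>) \<le> real m" using real_arch_simple by blast
    then have "k m \<omega> = enn2real (h \<omega>)" by (simp add: k_def)
    then show "ennreal (enn2real (h \<omega>) powr \<alpha>) \<le> (SUP m. ennreal (k m \<omega> powr \<alpha>))"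
      by (metis SUP_upper UNIV_I)
    show "(SUP m. ennreal (k m \<omega> powr \<alpha>)) \<le> ennreal (enn2real (h \<omega>) powr \<alpha>)"
      using \<alpha> by (intro SUP_least ennreal_leI powr_mono2) (auto simp: k_def)
  qed
  have inc: "incseq (\<lambda>m \<omega>. ennreal (k m \<omega> powr \<alpha>))"
    using \<alpha> by (intro incseq_SucI le_funI ennreal_leI powr_mono2) (auto simp: k_def)
  have "(\<integral>\<^sup>+\<omega>. ennreal (enn2real (h \<omega>) powr \<alpha>) \<partial>Q') = (SUP m. \<integral>\<^sup>+\<omega>. ennreal (k m \<omega> powr \<alpha>) \<partial>Q')"
    unfolding sup by (rule nn_integral_monotone_convergence_SUP[OF inc]) simp
  also have "\<dots> \<le> I" by (intro SUP_least Jle)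
  finally show "(\<integral>\<^sup>+\<omega>. ennreal (enn2real (RN_deriv (distr Q N g) (distr (density Q p) N g) \<omega>) powr \<alpha>) \<partial>distr Q N g)
          \<le> (\<integral>\<^sup>+x. ennreal (p x powr \<alpha>) \<partial>Q)"
    unfolding h_def Q'_def P'_def I_def .
qed



lemma psf_normal: "(\<And>k. s k > 0) \<Longrightarrow> product_sigma_finite (\<lambda>k. density lborel (normal_density (c k) (s k)))"
  unfolding product_sigma_finite_def by (auto intro: prob_space_imp_sigma_finite prob_space_normal_density)

lemma shift1:
  assumes "s > 0" shows
  "distr (density lborel (normal_density 0 s)) borel (\<lambda>x. x + a) = density lborel (normal_density a s)"
proof (rule measure_eqI)
  fix A assume A: "A \<in> sets (distr (density lborel (normal_density 0 s)) borel (\<lambda>x. x + a))"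
  then have [measurable]: "A \<in> sets borel" by simp
  have "emeasure (distr (density lborel (normal_density 0 s)) borel (\<lambda>x. x + a)) A
     = (\<integral>\<^sup>+x. ennreal (normal_density 0 s x) * indicator A (x + a) \<partial>lborel)"
    by (simp add: nn_integral_distr nn_integral_density flip: nn_integral_indicator)
  also have "\<dots> = (\<integral>\<^sup>+x. ennreal (normal_density a s x) * indicator A x \<partial>lborel)"
  proof -
    have "(\<integral>\<^sup>+x. ennreal (normal_density a s x) * indicator A x \<partial>lborel)
        = (\<integral>\<^sup>+x. ennreal (normal_density a s (a + 1 * x)) * indicator A (a + 1 * x) \<partial>lborel)"
      using nn_integral_real_affine[where c=1 and t=a and f="\<lambda>x. ennreal (normal_density a s x) * indicator A x"]
      by simp
    then show ?thesis by (simp add: normal_density_def add.commute)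
  qed
  also have "\<dots> = emeasure (density lborel (normal_density a s)) A"
    by (simp add: emeasure_density nn_integral_density[symmetric] flip: nn_integral_indicator)
  finally show "emeasure (distr (density lborel (normal_density 0 s)) borel (\<lambda>x. x + a)) A
      = emeasure (density lborel (normal_density a s)) A" .
qed simp

definition NM :: "nat set \<Rightarrow> (nat \<Rightarrow> real) \<Rightarrow> (nat \<Rightarrow> real) \<Rightarrow> (nat \<Rightarrow> real) measure" where
  "NM I s c = PiM I (\<lambda>k. density lborel (normal_density (c k) (s k)))"

lemma sets_NM: "sets (NM I s c) = sets (PiM I (\<lambda>_. lborel))"
  unfolding NM_def by (intro sets_PiM_cong) auto

lemma space_NM: "space (NM I s c) = PiE I (\<lambda>_. UNIV)"
  unfolding NM_def by (simp add: space_PiM)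

lemma shift_meas: "(\<lambda>z. \<lambda>k\<in>I. z k + c k) \<in> measurable (NM I s d) (NM I s' c')"
  unfolding measurable_cong_sets[OF sets_NM sets_NM] by measurable

lemma shiftPi:
  assumes I: "finite I" and s: "\<And>k. s k > 0"
  shows "distr (NM I s (\<lambda>_. 0)) (NM I s c) (\<lambda>z. \<lambda>k\<in>I. z k + c k) = NM I s c"
proof -
  interpret product_sigma_finite "\<lambda>k. density lborel (normal_density (c k) (s k))" by (rule psf_normal[OF s])
  interpret Z: product_sigma_finite "\<lambda>k. density lborel (normal_density 0 (s k))"
    by (rule psf_normal[OF s])
  show ?thesis unfolding NM_def[of I s c]
  proof (rule PiM_eqI[OF I])
    show "sets (distr (NM I s (\<lambda>_. 0)) (PiM I (\<lambda>k. density lborel (normal_density (c k) (s k)))) (\<lambda>z. \<lambda>k\<in>I. z k + c k)) = sets (PiM I (\<lambda>k. density lborel (normal_density (c k) (s k))))"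
      by simp
    fix A assume A: "\<And>i. i \<in> I \<Longrightarrow> A i \<in> sets (density lborel (normal_density (c i) (s i)))"
    then have A': "\<And>i. i \<in> I \<Longrightarrow> A i \<in> sets borel" by simp
    have pre: "(\<lambda>x. x + c i) -` A i \<in> sets borel" if i: "i \<in> I" for i
    proof -
      have "(\<lambda>x::real. x + c i) \<in> borel_measurable borel" by simp
      from measurable_sets[OF this A'[OF i]] show ?thesis by simp
    qed
    have PA: "PiE I A \<in> sets (NM I s c)" unfolding NM_def using A I by (intro sets_PiM_I_finite) auto
    have eq: "(\<lambda>z. \<lambda>k\<in>I. z k + c k) -` PiE I A \<inter> space (NM I s (\<lambda>_. 0)) = PiE I (\<lambda>k. (\<lambda>x. x + c k) -` A k)"
      by (auto simp: space_NM PiE_iff extensional_def)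
    have "emeasure (distr (NM I s (\<lambda>_. 0)) (PiM I (\<lambda>k. density lborel (normal_density (c k) (s k)))) (\<lambda>z. \<lambda>k\<in>I. z k + c k)) (PiE I A)
        = emeasure (NM I s (\<lambda>_. 0)) (PiE I (\<lambda>k. (\<lambda>x. x + c k) -` A k))"
      using PA shift_meas[where I=I and c=c and d="\<lambda>_. 0" and s=s and s'=s and c'=c] by (simp add: emeasure_distr NM_def eq[unfolded NM_def])
    also have "\<dots> = (\<Prod>k\<in>I. emeasure (density lborel (normal_density 0 (s k))) ((\<lambda>x. x + c k) -` A k))"
      unfolding NM_def using pre I by (subst Z.emeasure_PiM) auto
    also have "\<dots> = (\<Prod>k\<in>I. emeasure (distr (density lborel (normal_density 0 (s k))) borel (\<lambda>x. x + c k)) (A k))"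
      using A' by (intro prod.cong refl) (simp add: emeasure_distr)
    also have "\<dots> = (\<Prod>k\<in>I. emeasure (density lborel (normal_density (c k) (s k))) (A k))"
      using s by (simp add: shift1)
    finally show "emeasure (distr (NM I s (\<lambda>_. 0)) (PiM I (\<lambda>k. density lborel (normal_density (c k) (s k)))) (\<lambda>z. \<lambda>k\<in>I. z k + c k)) (PiE I A)
        = (\<Prod>k\<in>I. emeasure (density lborel (normal_density (c k) (s k))) (A k))" .
  qed
qed


lemma nd_ratio:
  assumes "s > 0"
  shows "normal_density c' s x * exp (((x - c')\<^sup>2 - (x - c)\<^sup>2) / (2 * s\<^sup>2)) = normal_density c s x"
proof -
  have "-(x - c')\<^sup>2 / (2 * s\<^sup>2) + ((x - c')\<^sup>2 - (x - c)\<^sup>2) / (2 * s\<^sup>2) = -(x - c)\<^sup>2 / (2 * s\<^sup>2)"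
    by (simp add: diff_divide_distrib)
  then show ?thesis unfolding normal_density_def
    by (simp add: mult.assoc exp_add[symmetric]) 
qed

lemma indicator_PiE_prod:
  assumes "finite I" "z \<in> PiE I B"
  shows "(indicator (PiE I A) z :: ennreal) = (\<Prod>k\<in>I. indicator (A k) (z k))"
proof (cases "\<forall>k\<in>I. z k \<in> A k")
  case True
  then have "z \<in> PiE I A" using assms by (auto simp: PiE_iff)
  then show ?thesis using True by simp
next
  case False
  then obtain k where k: "k \<in> I" "z k \<notin> A k" by auto
  then have "z \<notin> PiE I A" by (auto simp: PiE_iff)
  moreover have "(\<Prod>k\<in>I. (indicator (A k) (z k) :: ennreal)) = 0"
    using k assms by (intro prod_zero) (auto intro!: bexI[of _ k])
  ultimately show ?thesis by simp
qed

definition ratio :: "nat set \<Rightarrow> (nat \<Rightarrow> real) \<Rightarrow> (nat \<Rightarrow> real) \<Rightarrow> (nat \<Rightarrow> real) \<Rightarrow> (nat \<Rightarrow> real) \<Rightarrow> real" where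
  "ratio I s c c' z = (\<Prod>k\<in>I. exp (((z k - c' k)\<^sup>2 - (z k - c k)\<^sup>2) / (2 * (s k)\<^sup>2)))"

lemma ratio_meas[measurable]: "ratio I s c c' \<in> borel_measurable (NM I s' d)"
  unfolding measurable_cong_sets[OF sets_NM refl] ratio_def by measurable

lemma ratioPi:
  assumes I: "finite I" and s: "\<And>k. s k > 0"
  shows "NM I s c = density (NM I s c') (\<lambda>z. ennreal (ratio I s c c' z))"
proof -
  interpret product_sigma_finite "\<lambda>k. density lborel (normal_density (c k) (s k))" by (rule psf_normal[OF s])
  interpret C: product_sigma_finite "\<lambda>k. density lborel (normal_density (c' k) (s k))"
    by (rule psf_normal[OF s])
  show ?thesis unfolding NM_def[of I s c]
  proof (rule sym, rule PiM_eqI[OF I])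
    show "sets (density (NM I s c') (\<lambda>z. ennreal (ratio I s c c' z))) = sets (PiM I (\<lambda>k. density lborel (normal_density (c k) (s k))))"
      using sets_NM[of I s c'] sets_NM[of I s c] by (simp add: NM_def)
    fix A assume A: "\<And>i. i \<in> I \<Longrightarrow> A i \<in> sets (density lborel (normal_density (c i) (s i)))"
    then have A'[measurable]: "\<And>i. i \<in> I \<Longrightarrow> A i \<in> sets borel" by simp
    have PA: "PiE I A \<in> sets (NM I s c')"
      unfolding sets_NM using A' I by (intro sets_PiM_I_finite) auto
    have "emeasure (density (NM I s c') (\<lambda>z. ennreal (ratio I s c c' z))) (PiE I A)
        = (\<integral>\<^sup>+z. ennreal (ratio I s c c' z) * indicator (PiE I A) z \<partial>NM I s c')"
      using PA by (simp add: emeasure_density)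
    also have "\<dots> = (\<integral>\<^sup>+z. (\<Prod>k\<in>I. ennreal (exp (((z k - c' k)\<^sup>2 - (z k - c k)\<^sup>2) / (2 * (s k)\<^sup>2))) * indicator (A k) (z k)) \<partial>NM I s c')"
    proof (intro nn_integral_cong)
      fix z assume "z \<in> space (NM I s c')"
      then have z: "z \<in> PiE I (\<lambda>_. UNIV)" by (simp add: space_NM)
      show "ennreal (ratio I s c c' z) * indicator (PiE I A) z = (\<Prod>k\<in>I. ennreal (exp (((z k - c' k)\<^sup>2 - (z k - c k)\<^sup>2) / (2 * (s k)\<^sup>2))) * indicator (A k) (z k))"
        unfolding indicator_PiE_prod[OF I z] ratio_def prod.distrib
        by (simp add: prod_ennreal)
    qed
    also have "\<dots> = (\<Prod>k\<in>I. \<integral>\<^sup>+x. ennreal (exp (((x - c' k)\<^sup>2 - (x - c k)\<^sup>2) / (2 * (s k)\<^sup>2))) * indicator (A k) x \<partial>density lborel (normal_density (c' k) (s k)))"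
      unfolding NM_def using I A' by (subst C.product_nn_integral_prod) auto
    also have "\<dots> = (\<Prod>k\<in>I. \<integral>\<^sup>+x. ennreal (normal_density (c k) (s k) x) * indicator (A k) x \<partial>lborel)"
    proof (intro prod.cong refl)
      fix k assume k: "k \<in> I"
      have "(\<integral>\<^sup>+x. ennreal (exp (((x - c' k)\<^sup>2 - (x - c k)\<^sup>2) / (2 * (s k)\<^sup>2))) * indicator (A k) x \<partial>density lborel (normal_density (c' k) (s k)))
          = (\<integral>\<^sup>+x. ennreal (normal_density (c' k) (s k) x) * (ennreal (exp (((x - c' k)\<^sup>2 - (x - c k)\<^sup>2) / (2 * (s k)\<^sup>2))) * indicator (A k) x) \<partial>lborel)"
        using k A' by (subst nn_integral_density) auto
      also have "\<dots> = (\<integral>\<^sup>+x. ennreal (normal_density (c k) (s k) x) * indicator (A k) x \<partial>lborel)"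
        using nd_ratio[OF s[of k]]
        by (intro nn_integral_cong) (simp add: mult.assoc[symmetric] ennreal_mult'[symmetric])
      finally show "(\<integral>\<^sup>+x. ennreal (exp (((x - c' k)\<^sup>2 - (x - c k)\<^sup>2) / (2 * (s k)\<^sup>2))) * indicator (A k) x \<partial>density lborel (normal_density (c' k) (s k)))
          = (\<integral>\<^sup>+x. ennreal (normal_density (c k) (s k) x) * indicator (A k) x \<partial>lborel)" .
    qed
    also have "\<dots> = (\<Prod>k\<in>I. emeasure (density lborel (normal_density (c k) (s k))) (A k))"
      using A' by (intro prod.cong refl) (simp add: emeasure_density)
    finally show "emeasure (density (NM I s c') (\<lambda>z. ennreal (ratio I s c c' z))) (PiE I A)
        = (\<Prod>k\<in>I. emeasure (density lborel (normal_density (c k) (s k))) (A k))" .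
  qed
qed


lemma nd_alpha:
  assumes "s > 0"
  shows "normal_density c' s x * exp (\<alpha> * (((x - c')\<^sup>2 - (x - c)\<^sup>2) / (2 * s\<^sup>2)))
       = exp (\<alpha> * (\<alpha> - 1) * (c - c')\<^sup>2 / (2 * s\<^sup>2)) * normal_density (\<alpha> * c + (1 - \<alpha>) * c') s x"
proof -
  have num: "-(x - c')\<^sup>2 + \<alpha> * ((x - c')\<^sup>2 - (x - c)\<^sup>2) = \<alpha> * (\<alpha> - 1) * (c - c')\<^sup>2 + -(x - (\<alpha> * c + (1 - \<alpha>) * c'))\<^sup>2"
    by (simp add: power2_eq_square algebra_simps)
  have "-(x - c')\<^sup>2 / (2 * s\<^sup>2) + \<alpha> * (((x - c')\<^sup>2 - (x - c)\<^sup>2) / (2 * s\<^sup>2))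
      = \<alpha> * (\<alpha> - 1) * (c - c')\<^sup>2 / (2 * s\<^sup>2) + -(x - (\<alpha> * c + (1 - \<alpha>) * c'))\<^sup>2 / (2 * s\<^sup>2)"
  proof -
    have gen: "\<And>a b d::real. a / d + \<alpha> * (b / d) = (a + \<alpha> * b) / d"
      by (simp add: add_divide_distrib)
    have "-(x - c')\<^sup>2 / (2 * s\<^sup>2) + \<alpha> * (((x - c')\<^sup>2 - (x - c)\<^sup>2) / (2 * s\<^sup>2))
        = (-(x - c')\<^sup>2 + \<alpha> * ((x - c')\<^sup>2 - (x - c)\<^sup>2)) / (2 * s\<^sup>2)"
      by (rule gen)
    also have "\<dots> = (\<alpha> * (\<alpha> - 1) * (c - c')\<^sup>2 + -(x - (\<alpha> * c + (1 - \<alpha>) * c'))\<^sup>2) / (2 * s\<^sup>2)"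
      by (simp only: num)
    also have "\<dots> = \<alpha> * (\<alpha> - 1) * (c - c')\<^sup>2 / (2 * s\<^sup>2) + -(x - (\<alpha> * c + (1 - \<alpha>) * c'))\<^sup>2 / (2 * s\<^sup>2)"
      by (simp only: add_divide_distrib)
    finally show ?thesis .
  qed
  then have "exp (-(x - c')\<^sup>2 / (2 * s\<^sup>2)) * exp (\<alpha> * (((x - c')\<^sup>2 - (x - c)\<^sup>2) / (2 * s\<^sup>2)))
      = exp (\<alpha> * (\<alpha> - 1) * (c - c')\<^sup>2 / (2 * s\<^sup>2)) * exp (-(x - (\<alpha> * c + (1 - \<alpha>) * c'))\<^sup>2 / (2 * s\<^sup>2))"
    by (simp only: exp_add[symmetric])
  then show ?thesis unfolding normal_density_def
    by (metis (no_types, lifting) mult.assoc mult.left_commute)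
qed

lemma renyi_int:
  assumes I: "finite I" and s: "\<And>k. s k > 0" and \<alpha>: "\<alpha> > 1"
  shows "(\<integral>\<^sup>+z. ennreal (ratio I s c c' z powr \<alpha>) \<partial>NM I s c')
       = ennreal (\<Prod>k\<in>I. exp (\<alpha> * (\<alpha> - 1) * (c k - c' k)\<^sup>2 / (2 * (s k)\<^sup>2)))"
proof -
  interpret C: product_sigma_finite "\<lambda>k. density lborel (normal_density (c' k) (s k))"
    by (rule psf_normal[OF s])
  have pw: "ratio I s c c' z powr \<alpha> = (\<Prod>k\<in>I. exp (\<alpha> * (((z k - c' k)\<^sup>2 - (z k - c k)\<^sup>2) / (2 * (s k)\<^sup>2))))" for z
  proof -
    have "ratio I s c c' z = exp (\<Sum>k\<in>I. ((z k - c' k)\<^sup>2 - (z k - c k)\<^sup>2) / (2 * (s k)\<^sup>2))"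
      unfolding ratio_def using I by (simp add: exp_sum)
    then have "ratio I s c c' z powr \<alpha> = exp (\<alpha> * (\<Sum>k\<in>I. ((z k - c' k)\<^sup>2 - (z k - c k)\<^sup>2) / (2 * (s k)\<^sup>2)))"
      by (simp add: powr_def)
    then show ?thesis using I by (simp add: sum_distrib_left exp_sum)
  qed
  have "(\<integral>\<^sup>+z. ennreal (ratio I s c c' z powr \<alpha>) \<partial>NM I s c')
      = (\<integral>\<^sup>+z. (\<Prod>k\<in>I. ennreal (exp (\<alpha> * (((z k - c' k)\<^sup>2 - (z k - c k)\<^sup>2) / (2 * (s k)\<^sup>2))))) \<partial>NM I s c')"
    unfolding pw by (simp add: prod_ennreal)
  also have "\<dots> = (\<Prod>k\<in>I. \<integral>\<^sup>+x. ennreal (exp (\<alpha> * (((x - c' k)\<^sup>2 - (x - c k)\<^sup>2) / (2 * (s k)\<^sup>2)))) \<partial>density lborel (normal_density (c' k) (s k)))"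
    unfolding NM_def using I by (subst C.product_nn_integral_prod) auto
  also have "\<dots> = (\<Prod>k\<in>I. ennreal (exp (\<alpha> * (\<alpha> - 1) * (c k - c' k)\<^sup>2 / (2 * (s k)\<^sup>2))))"
  proof (intro prod.cong refl)
    fix k assume k: "k \<in> I"
    let ?m = "\<alpha> * c k + (1 - \<alpha>) * c' k"
    let ?K = "exp (\<alpha> * (\<alpha> - 1) * (c k - c' k)\<^sup>2 / (2 * (s k)\<^sup>2))"
    interpret pm: prob_space "density lborel (normal_density ?m (s k))"
      using s[of k] by (simp add: prob_space_normal_density)
    have "(\<integral>\<^sup>+x. ennreal (exp (\<alpha> * (((x - c' k)\<^sup>2 - (x - c k)\<^sup>2) / (2 * (s k)\<^sup>2)))) \<partial>density lborel (normal_density (c' k) (s k)))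
        = (\<integral>\<^sup>+x. ennreal (normal_density (c' k) (s k) x) * ennreal (exp (\<alpha> * (((x - c' k)\<^sup>2 - (x - c k)\<^sup>2) / (2 * (s k)\<^sup>2)))) \<partial>lborel)"
      by (subst nn_integral_density) auto
    also have "\<dots> = (\<integral>\<^sup>+x. ennreal ?K * ennreal (normal_density ?m (s k) x) \<partial>lborel)"
      using nd_alpha[OF s[of k], of "c' k" _ \<alpha> "c k"]
      by (intro nn_integral_cong) (simp add: ennreal_mult'[symmetric])
    also have "\<dots> = ennreal ?K * (\<integral>\<^sup>+x. ennreal (normal_density ?m (s k) x) \<partial>lborel)"
      by (subst nn_integral_cmult) auto
    also have "(\<integral>\<^sup>+x. ennreal (normal_density ?m (s k) x) \<partial>lborel) = emeasure (density lborel (normal_density ?m (s k))) UNIV"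
      by (simp add: emeasure_density)
    also have "\<dots> = 1" using pm.emeasure_space_1 by simp
    finally show "(\<integral>\<^sup>+x. ennreal (exp (\<alpha> * (((x - c' k)\<^sup>2 - (x - c k)\<^sup>2) / (2 * (s k)\<^sup>2)))) \<partial>density lborel (normal_density (c' k) (s k))) = ennreal ?K"
      by simp
  qed
  also have "\<dots> = ennreal (\<Prod>k\<in>I. exp (\<alpha> * (\<alpha> - 1) * (c k - c' k)\<^sup>2 / (2 * (s k)\<^sup>2)))"
    by (simp add: prod_ennreal)
  finally show ?thesis .
qed



lemma opt_meas:
  fixes F :: "'a \<Rightarrow> 'b::topological_space"
  assumes F[measurable]: "F \<in> borel_measurable M" and P[measurable]: "Measurable.pred M P"
  shows "(\<lambda>z. if P z then Some (F z) else None) \<in> measurable M (sigma UNIV {A. Some -` A \<in> sets (borel :: 'b measure)})"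
proof (rule measurable_measure_of)
  fix A assume "A \<in> {A. Some -` A \<in> sets (borel :: 'b measure)}"
  then have A[measurable]: "Some -` A \<in> sets borel" by simp
  have "(\<lambda>z. if P z then Some (F z) else None) -` A \<inter> space M
      = {z \<in> space M. P z \<and> F z \<in> Some -` A} \<union> {z \<in> space M. \<not> P z \<and> None \<in> A}"
    by (auto split: if_splits)
  also have "\<dots> \<in> sets M" by measurable
  finally show "(\<lambda>z. if P z then Some (F z) else None) -` A \<inter> space M \<in> sets M" .
qed auto

lemma G_meas: "dpstats_out n n1 r \<Delta> [] \<in> measurable (NM {0..<8} s c) out_space"
  unfolding measurable_cong_sets[OF sets_NM refl] out_space_def dpstats_out_def Let_def
  apply (rule opt_meas)
   apply simp_all
   apply measurable
  done



definition cvec :: "nat \<Rightarrow> nat \<Rightarrow> real \<Rightarrow> (real \<times> real) list \<Rightarrow> nat \<Rightarrow> real" where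
 "cvec n n1 \<Delta> xs k = (let G = (if k < 4 then take n1 xs else drop n1 xs); nn = real (if k < 4 then n1 else n - n1) in
   (if k mod 4 = 0 then (\<Sum>(x,y)\<leftarrow>G. clip (-\<Delta>) \<Delta> x)
    else if k mod 4 = 1 then (\<Sum>(x,y)\<leftarrow>G. clip 0 (\<Delta>^2) (x^2))
    else if k mod 4 = 2 then (\<Sum>(x,y)\<leftarrow>G. clip (-(\<Delta>^2)) (\<Delta>^2) (x*y))
    else (\<Sum>(x,y)\<leftarrow>G. clip 0 (\<Delta>^2) (y^2))) / nn)"

lemma dp_shift: "dpstats_out n n1 r \<Delta> xs z = dpstats_out n n1 r \<Delta> [] (\<lambda>k\<in>{0..<8}. z k + cvec n n1 \<Delta> xs k)"
  unfolding dpstats_out_def Let_def cvec_def by (simp add: add.commute)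


lemma sum_diff_one:
  fixes f :: "'a \<Rightarrow> real"
  assumes "length L = length L'"
    and "\<forall>i<length L. \<forall>j<length L. L!i \<noteq> L'!i \<longrightarrow> L!j \<noteq> L'!j \<longrightarrow> i = j"
    and B: "\<And>a b. \<bar>f a - f b\<bar> \<le> B"
  shows "\<bar>sum_list (map f L) - sum_list (map f L')\<bar> \<le> B"
  using assms(1,2)
proof (induction L L' rule: list_induct2)
  case Nil
  then show ?case using B[of undefined undefined] by simp
next
  case (Cons a L b L')
  show ?case
  proof (cases "a = b")
    case True
    have "\<forall>i<length L. \<forall>j<length L. L!i \<noteq> L'!i \<longrightarrow> L!j \<noteq> L'!j \<longrightarrow> i = j"
    proof (intro allI impI)
      fix i j assume "i < length L" "j < length L" "L!i \<noteq> L'!i" "L!j \<noteq> L'!j"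
      then show "i = j" using Cons.prems[rule_format, of "Suc i" "Suc j"] by simp
    qed
    then show ?thesis using Cons.IH True by simp
  next
    case False
    have "L = L'"
    proof (rule nth_equalityI)
      show "length L = length L'" by fact
      fix i assume "i < length L"
      then show "L!i = L'!i" using Cons.prems[rule_format, of "Suc i" 0] False by auto
    qed
    then show ?thesis using B[of a b] by simp
  qed
qed

lemma clip_diff: "a \<le> b \<Longrightarrow> \<bar>clip a b u - clip a b v\<bar> \<le> b - a"
  unfolding clip_def by (auto simp: max_def min_def abs_if)

definition Bk :: "real \<Rightarrow> nat \<Rightarrow> real" where
  "Bk \<Delta> k = (if k mod 4 = 0 then 2 * \<Delta> else if k mod 4 = 2 then 2 * \<Delta>^2 else \<Delta>^2)"

lemma neighboring_groups:
  assumes nb: "neighboring n xs xs'" and n1: "n1 < n"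
  shows "length (take n1 xs) = length (take n1 xs')"
    "\<forall>i<length (take n1 xs). \<forall>j<length (take n1 xs). take n1 xs!i \<noteq> take n1 xs'!i \<longrightarrow> take n1 xs!j \<noteq> take n1 xs'!j \<longrightarrow> i = j"
    "length (drop n1 xs) = length (drop n1 xs')"
    "\<forall>i<length (drop n1 xs). \<forall>j<length (drop n1 xs). drop n1 xs!i \<noteq> drop n1 xs'!i \<longrightarrow> drop n1 xs!j \<noteq> drop n1 xs'!j \<longrightarrow> i = j"
proof -
  from nb obtain i0 where len: "length xs = n" "length xs' = n" and i0: "i0 < n"
    and eq: "\<And>j. j < n \<Longrightarrow> j \<noteq> i0 \<Longrightarrow> xs!j = xs'!j"
    unfolding neighboring_def by blast
  show "length (take n1 xs) = length (take n1 xs')" "length (drop n1 xs) = length (drop n1 xs')"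
    using len by auto
  show "\<forall>i<length (take n1 xs). \<forall>j<length (take n1 xs). take n1 xs!i \<noteq> take n1 xs'!i \<longrightarrow> take n1 xs!j \<noteq> take n1 xs'!j \<longrightarrow> i = j"
    using len eq n1 by (metis length_take min.strict_boundedE nth_take)
  show "\<forall>i<length (drop n1 xs). \<forall>j<length (drop n1 xs). drop n1 xs!i \<noteq> drop n1 xs'!i \<longrightarrow> drop n1 xs!j \<noteq> drop n1 xs'!j \<longrightarrow> i = j"
  proof (intro allI impI)
    fix i j assume "i < length (drop n1 xs)" "j < length (drop n1 xs)"
      "drop n1 xs!i \<noteq> drop n1 xs'!i" "drop n1 xs!j \<noteq> drop n1 xs'!j"
    then show "i = j" using len eq n1 by (auto simp: nth_drop) (metis add_left_cancel less_diff_conv add.commute)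
  qed
qed

lemma cvec_diff:
  assumes nb: "neighboring n xs xs'" and n1: "n1 < n" and \<Delta>: "\<Delta> > 0"
  shows "\<bar>cvec n n1 \<Delta> xs k - cvec n n1 \<Delta> xs' k\<bar> \<le> Bk \<Delta> k / real (if k < 4 then n1 else n - n1)"
proof -
  define G where "G = (\<lambda>xs::(real \<times> real) list. if k < 4 then take n1 xs else drop n1 xs)"
  define nn where "nn = real (if k < 4 then n1 else n - n1)"
  have nn0: "nn \<ge> 0" unfolding nn_def by simp
  have L: "length (G xs) = length (G xs')"
    "\<forall>i<length (G xs). \<forall>j<length (G xs). G xs!i \<noteq> G xs'!i \<longrightarrow> G xs!j \<noteq> G xs'!j \<longrightarrow> i = j"
    unfolding G_def using neighboring_groups[OF nb n1] by auto
  define f where "f = (if k mod 4 = 0 then (\<lambda>(x::real,y::real). clip (-\<Delta>) \<Delta> x)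
    else if k mod 4 = 1 then (\<lambda>(x,y). clip 0 (\<Delta>^2) (x^2))
    else if k mod 4 = 2 then (\<lambda>(x,y). clip (-(\<Delta>^2)) (\<Delta>^2) (x*y))
    else (\<lambda>(x,y). clip 0 (\<Delta>^2) (y^2)))"
  have cv: "cvec n n1 \<Delta> ys k = sum_list (map f (G ys)) / nn" for ys
    unfolding cvec_def G_def nn_def f_def Let_def by simp
  have fb: "\<bar>f a - f b\<bar> \<le> Bk \<Delta> k" for a b
    unfolding f_def Bk_def using \<Delta> by (cases a; cases b) (auto intro: clip_diff[THEN order_trans])
  have "\<bar>sum_list (map f (G xs)) - sum_list (map f (G xs'))\<bar> \<le> Bk \<Delta> k"
    by (rule sum_diff_one[OF L fb])
  then have "\<bar>sum_list (map f (G xs)) - sum_list (map f (G xs'))\<bar> / nn \<le> Bk \<Delta> k / nn"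
    using nn0 by (simp add: divide_right_mono)
  then show ?thesis unfolding cv nn_def[symmetric] by (simp add: diff_divide_distrib[symmetric] abs_divide nn0)
qed


lemma noise_var_Bk:
  "noise_var \<rho> \<Delta> n1 n2 k = (Bk \<Delta> k)\<^sup>2 / (2 * (\<rho>/8) * (real (if k < 4 then n1 else n2))\<^sup>2)"
proof -
  have "k mod 4 = 0 \<or> k mod 4 = 1 \<or> k mod 4 = 2 \<or> k mod 4 = 3" by auto
  then show ?thesis
    unfolding noise_var_def Bk_def Let_def
    by (elim disjE) (simp_all add: power2_eq_square power4_eq_xxxx field_simps)
qed

lemma gen_term:
  fixes d B nn \<rho>' :: real
  assumes "B > 0" "nn > 0" "\<rho>' > 0" "\<bar>d\<bar> \<le> B / nn"
  shows "d\<^sup>2 / (2 * (B\<^sup>2 / (2 * \<rho>' * nn\<^sup>2))) \<le> \<rho>'"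
proof -
  have "d\<^sup>2 \<le> (B / nn)\<^sup>2"
    using assms by (metis abs_ge_zero abs_power2 order_trans power_mono power2_abs)
  then have "d\<^sup>2 * nn\<^sup>2 \<le> B\<^sup>2" using assms by (simp add: field_simps power_divide)
  then have "d\<^sup>2 * nn\<^sup>2 * \<rho>' \<le> B\<^sup>2 * \<rho>'" using assms by (simp add: mult_right_mono)
  then show ?thesis using assms by (simp add: field_simps)
qed

lemma term_bound:
  assumes \<rho>: "\<rho> > 0" and \<Delta>: "\<Delta> > 0" and n1: "1 \<le> n1" "n1 < n"
    and d: "\<bar>d\<bar> \<le> Bk \<Delta> k / real (if k < 4 then n1 else n - n1)"
  shows "d\<^sup>2 / (2 * (sqrt (noise_var \<rho> \<Delta> n1 (n - n1) k))\<^sup>2) \<le> \<rho> / 8"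
proof -
  have B: "Bk \<Delta> k > 0" unfolding Bk_def using \<Delta> by auto
  have nn: "real (if k < 4 then n1 else n - n1) > 0" using n1 by auto
  have nv: "noise_var \<rho> \<Delta> n1 (n - n1) k \<ge> 0" unfolding noise_var_Bk using \<rho> by simp
  show ?thesis
    using gen_term[OF B nn _ d, of "\<rho>/8"] \<rho> nv unfolding noise_var_Bk by simp
qed




theorem lemma4p3:
  fixes n n1 r q :: nat and \<rho> \<Delta> :: real
  assumes "\<rho> > 0" and "\<Delta> > 0"
    and "n \<ge> 2" and "1 \<le> n1" and "n1 < n"
    and "r > 0" and "q > 0" and "r < n"
  shows "zCDP n \<rho> (DPStats_M n n1 r q \<rho> \<Delta>)"
  unfolding zCDP_def
proof (intro allI impI)
  fix xs xs' :: "(real \<times> real) list" and \<alpha> :: real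
  assume nb: "neighboring n xs xs'" and \<alpha>: "\<alpha> > 1"
  define s where "s = (\<lambda>k. sqrt (noise_var \<rho> \<Delta> n1 (n - n1) k))"
  have s_pos: "s k > 0" for k
  proof -
    have B: "Bk \<Delta> k > 0" unfolding Bk_def using assms by auto
    have nn: "real (if k < 4 then n1 else n - n1) > 0" using assms by auto
    show ?thesis unfolding s_def noise_var_Bk using B nn assms by simp
  qed
  define G where "G = dpstats_out n n1 r \<Delta> []"
  have Gm: "G \<in> measurable (NM {0..<8} s c) out_space" for c unfolding G_def by (rule G_meas)
  have Mform: "DPStats_M n n1 r q \<rho> \<Delta> ys = distr (NM {0..<8} s (cvec n n1 \<Delta> ys)) out_space G" for ys
  proof -
    have N0: "noise_space \<rho> \<Delta> n1 (n - n1) = NM {0..<8} s (\<lambda>_. 0)"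
      by (simp add: noise_space_def NM_def s_def)
    have "DPStats_M n n1 r q \<rho> \<Delta> ys = distr (NM {0..<8} s (\<lambda>_. 0)) out_space (G \<circ> (\<lambda>z. \<lambda>k\<in>{0..<8}. z k + cvec n n1 \<Delta> ys k))"
      unfolding DPStats_M_def N0 G_def by (intro distr_cong refl) (simp only: comp_def, rule dp_shift)
    also have "\<dots> = distr (distr (NM {0..<8} s (\<lambda>_. 0)) (NM {0..<8} s (cvec n n1 \<Delta> ys)) (\<lambda>z. \<lambda>k\<in>{0..<8}. z k + cvec n n1 \<Delta> ys k)) out_space G"
      by (rule distr_distr[symmetric, OF Gm shift_meas])
    also have "\<dots> = distr (NM {0..<8} s (cvec n n1 \<Delta> ys)) out_space G"
      by (subst shiftPi) (auto simp: s_pos)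
    finally show ?thesis .
  qed
  define c where "c = cvec n n1 \<Delta> xs"
  define c' where "c' = cvec n n1 \<Delta> xs'"
  define Q where "Q = NM {0..<8} s c'"
  define p where "p = ratio {0..<8} s c c'"
  have PQ: "NM {0..<8} s c = density Q p" unfolding Q_def p_def by (rule ratioPi) (auto simp: s_pos)
  have Qprob: "prob_space Q" unfolding Q_def NM_def
    by (intro prob_space_PiM) (simp add: prob_space_normal_density s_pos)
  have pm: "p \<in> borel_measurable Q" unfolding p_def Q_def by (rule ratio_meas)
  have p0: "p z \<ge> 0" for z unfolding p_def ratio_def by (simp add: prod_nonneg)
  have Gm': "G \<in> measurable Q out_space" unfolding Q_def by (rule Gm)
  have MX: "DPStats_M n n1 r q \<rho> \<Delta> xs = distr (density Q p) out_space G"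
    unfolding Mform c_def[symmetric] PQ ..
  have MX': "DPStats_M n n1 r q \<rho> \<Delta> xs' = distr Q out_space G"
    unfolding Mform c'_def[symmetric] Q_def ..
  note dp = dp_bound[OF Qprob pm p0 Gm' \<alpha>]
  define E where "E = (\<Prod>k\<in>{0..<8::nat}. exp (\<alpha> * (\<alpha> - 1) * (c k - c' k)\<^sup>2 / (2 * (s k)\<^sup>2)))"
  define I' where "I' = (\<integral>\<^sup>+\<omega>. ennreal (enn2real (RN_deriv (distr Q out_space G) (distr (density Q p) out_space G) \<omega>) powr \<alpha>) \<partial>distr Q out_space G)"
  have I'E: "I' \<le> ennreal E"
    using dp(2) unfolding I'_def E_def p_def Q_def
    by (subst (asm) renyi_int) (auto simp: s_pos \<alpha>)
  have Ele: "E \<le> exp (\<alpha> * (\<alpha> - 1) * \<rho>)"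
  proof -
    have "E = exp (\<Sum>k\<in>{0..<8::nat}. \<alpha> * (\<alpha> - 1) * ((c k - c' k)\<^sup>2 / (2 * (s k)\<^sup>2)))"
      unfolding E_def by (simp add: exp_sum)
    also have "\<dots> \<le> exp (\<Sum>k\<in>{0..<8::nat}. \<alpha> * (\<alpha> - 1) * (\<rho> / 8))"
    proof (intro exp_le_cancel_iff[THEN iffD2] sum_mono mult_left_mono)
      fix k :: nat
      have d: "\<bar>c k - c' k\<bar> \<le> Bk \<Delta> k / real (if k < 4 then n1 else n - n1)"
        unfolding c_def c'_def using cvec_diff[OF nb] assms by auto
      show "(c k - c' k)\<^sup>2 / (2 * (s k)\<^sup>2) \<le> \<rho> / 8"
        unfolding s_def using term_bound[OF assms(1,2,4,5) d] .
    qed (use \<alpha> in auto)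
    also have "\<dots> = exp (\<alpha> * (\<alpha> - 1) * \<rho>)" by simp
    finally show ?thesis .
  qed
  have ln_le: "ln (enn2real I') / (\<alpha> - 1) \<le> \<rho> * \<alpha>"
  proof -
    have E0: "E \<ge> 0" unfolding E_def by (simp add: prod_nonneg)
    have "enn2real I' \<le> E" using enn2real_mono[OF I'E] E0 by simp
    have "ln (enn2real I') \<le> \<alpha> * (\<alpha> - 1) * \<rho>"
    proof (cases "enn2real I' > 0")
      case True
      then have "ln (enn2real I') \<le> ln (exp (\<alpha> * (\<alpha> - 1) * \<rho>))"
        using \<open>enn2real I' \<le> E\<close> Ele by (subst ln_le_cancel_iff) auto
      then show ?thesis by simp
    next
      case False
      then have "enn2real I' = 0" using enn2real_nonneg[of I'] by linarith
      then show ?thesis using \<alpha> assms(1) by simp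
    qed
    then show ?thesis using \<alpha> by (simp add: pos_divide_le_eq algebra_simps)
  qed
  have fin: "I' \<noteq> \<infinity>" using I'E by (auto simp: top_unique)
  show "renyi_divergence \<alpha> (DPStats_M n n1 r q \<rho> \<Delta> xs) (DPStats_M n n1 r q \<rho> \<Delta> xs') \<le> ereal (\<rho> * \<alpha>)"
    unfolding MX MX' renyi_divergence_def Let_def using dp(1) fin ln_le
    by (simp add: I'_def[symmetric])
qed


end
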